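(* The intersection graph of $n$ horizontal and vertical line segments in the plane admits a $3$-hop spanner of size $O(n\log n)$.
   Context: The intersection graph has the segments as vertices, with an edge iff the two segments intersect. For a graph $G$ and integer $t\ge1$, a $t$-hop spanner is a subgraph $\widehat{G}$ of $G$ on the same vertex set such that for every edge $uv\in E(G)$ there is a $u$–$v$ path in $\widehat{G}$ with at most $t$ edges; its size is its number of edges. *)

theory Defs
  imports "HOL-Analysis.Analysis"
begin

type_synonym seg = "(real \<times> real) \<times> (real \<times> real)"

definition horizontal :: "seg \<Rightarrow> bool" where
  "horizontal s \<longleftrightarrow> snd (fst s) = snd (snd s)"

definition vertical :: "seg \<Rightarrow> bool" where
  "vertical s \<longleftrightarrow> fst (fst s) = fst (snd s)"

definition seg_points :: "seg \<Rightarrow> (real \<times> real) set" where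
  "seg_points s = closed_segment (fst s) (snd s)"

definition isect_edges :: "nat \<Rightarrow> (nat \<Rightarrow> seg) \<Rightarrow> nat set set" where
  "isect_edges n s = {{i, j} | i j. i < n \<and> j < n \<and> i \<noteq> j \<and>
      seg_points (s i) \<inter> seg_points (s j) \<noteq> {}}"

fun hop_reach :: "nat set set \<Rightarrow> nat \<Rightarrow> nat \<Rightarrow> nat \<Rightarrow> bool" where
  "hop_reach H 0 u v \<longleftrightarrow> u = v"
| "hop_reach H (Suc k) u v \<longleftrightarrow> hop_reach H k u v \<or> (\<exists>w. {u, w} \<in> H \<and> hop_reach H k w v)"

definition is_hop_spanner :: "nat set set \<Rightarrow> nat \<Rightarrow> nat set set \<Rightarrow> bool" where
  "is_hop_spanner E t H \<longleftrightarrow> H \<subseteq> E \<and> (\<forall>u v. {u, v} \<in> E \<longrightarrow> hop_reach H t u v)"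

end

theory Submission
  imports Defs
begin


lemma pierce:
  fixes G :: "(real \<times> real) set" and Y :: "real set"
  assumes "finite G" "finite Y"
    and "\<forall>(a,b)\<in>G. {a..b} \<inter> Y \<noteq> {}"
    and "\<forall>(a,b)\<in>G. \<forall>(c,d)\<in>G. c \<le> a \<and> b \<le> d \<longrightarrow> c = a \<and> d = b"
  shows "\<exists>Q\<subseteq>Y. (\<forall>(a,b)\<in>G. {a..b} \<inter> Q \<noteq> {}) \<and> (\<forall>(a,b)\<in>G. card ({a..b} \<inter> Q) \<le> 2)
            \<and> (\<forall>q\<in>Q. \<exists>(a,b)\<in>G. q = Max ({a..b} \<inter> Y))"
  using assms
proof (induction "card G" arbitrary: G rule: less_induct)
  case less
  show ?case
  proof (cases "G = {}")
    case True
    then show ?thesis by auto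
  next
    case False
    define top where "top = (\<lambda>(a::real,b::real). Max ({a..b} \<inter> Y))"
    have topin: "top (a,b) \<in> {a..b} \<inter> Y" if "(a,b) \<in> G" for a b
    proof -
      have ne: "{a..b} \<inter> Y \<noteq> {}" using less.prems(3) that by auto
      have fin: "finite ({a..b} \<inter> Y)" using less.prems(2) by auto
      show ?thesis unfolding top_def using Max_in[OF fin ne] by simp
    qed
    have topmax: "z \<le> top (a,b)" if "(a,b) \<in> G" "z \<in> {a..b} \<inter> Y" for a b z
      using less.prems(2) that unfolding top_def by (simp add: Max_ge)
    define p1 where "p1 = Min (top ` G)"
    have p1in: "p1 \<in> top ` G" unfolding p1_def using less.prems False by (auto intro!: Min_in)
    have p1le: "p1 \<le> top g" if "g \<in> G" for g unfolding p1_def using less.prems that by auto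
    obtain a0 b0 where ab0: "(a0,b0) \<in> G" "p1 = top (a0,b0)" using p1in by auto
    define G' where "G' = {(a,b)\<in>G. a > p1}"
    have "(a0,b0) \<notin> G'" using topin[OF ab0(1)] ab0 unfolding G'_def by auto
    hence "G' \<subset> G" using ab0 unfolding G'_def by auto
    hence cardlt: "card G' < card G" using less.prems by (auto intro: psubset_card_mono)
    have "finite G'" using less.prems(1) \<open>G' \<subset> G\<close> by (auto intro: finite_subset)
    moreover have "\<forall>(a,b)\<in>G'. {a..b} \<inter> Y \<noteq> {}" using less.prems unfolding G'_def by auto
    moreover have "\<forall>(a,b)\<in>G'. \<forall>(c,d)\<in>G'. c \<le> a \<and> b \<le> d \<longrightarrow> c = a \<and> d = b"
      using less.prems(4) unfolding G'_def by auto
    ultimately obtain Q' where Q': "Q' \<subseteq> Y" "\<forall>(a,b)\<in>G'. {a..b} \<inter> Q' \<noteq> {}"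
      "\<forall>(a,b)\<in>G'. card ({a..b} \<inter> Q') \<le> 2" "\<forall>q\<in>Q'. \<exists>(a,b)\<in>G'. q = Max ({a..b} \<inter> Y)"
      using less.hyps[OF cardlt] less.prems(2) by blast
    have Q'gt: "q > p1" if qQ: "q \<in> Q'" for q
    proof -
      obtain a b where "(a,b) \<in> G'" "q = Max ({a..b} \<inter> Y)" using Q'(4) qQ by auto
      then show ?thesis using topin[of a b] unfolding G'_def top_def by auto
    qed
    define Q where "Q = insert p1 Q'"
    have "Q \<subseteq> Y" using Q'(1) topin[OF ab0(1)] ab0(2) unfolding Q_def by auto
    moreover have "\<forall>(a,b)\<in>G. {a..b} \<inter> Q \<noteq> {}"
    proof (clarify)
      fix a b assume ab: "(a,b) \<in> G" and e: "{a..b} \<inter> Q = {}"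
      show False
      proof (cases "a > p1")
        case True
        then have "(a,b) \<in> G'" using ab unfolding G'_def by auto
        then show False using Q'(2) e unfolding Q_def by auto
      next
        case False
        have "p1 \<le> top (a,b)" using p1le[OF ab] .
        then have "p1 \<in> {a..b}" using False topin[OF ab] by auto
        then show False using e unfolding Q_def by auto
      qed
    qed
    moreover have "\<forall>(a,b)\<in>G. card ({a..b} \<inter> Q) \<le> 2"
    proof (clarify)
      fix a b assume ab: "(a,b) \<in> G"
      show "card ({a..b} \<inter> Q) \<le> 2"
      proof (cases "a > p1")
        case True
        then have "(a,b) \<in> G'" using ab unfolding G'_def by auto
        moreover have "{a..b} \<inter> Q = {a..b} \<inter> Q'" using True unfolding Q_def by auto
        ultimately show ?thesis using Q'(3) by auto
      next
        case False
        have one: "card ({a..b} \<inter> Q') \<le> 1"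
        proof (rule ccontr)
          assume "\<not> ?thesis"
          then have "2 \<le> card ({a..b} \<inter> Q')" by auto
          moreover have fin: "finite ({a..b} \<inter> Q')"
            using Q'(1) less.prems(2) by (auto intro: finite_subset)
          ultimately obtain u v where uv: "u \<in> {a..b} \<inter> Q'" "v \<in> {a..b} \<inter> Q'" "u \<noteq> v"
            using card_le_Suc0_iff_eq[OF fin] by (metis One_nat_def not_less_eq_eq numeral_2_eq_2)
          obtain qb qc where qbc: "qb \<in> {a..b} \<inter> Q'" "qc \<in> {a..b} \<inter> Q'" "qb < qc"
            using uv by (metis linorder_neqE_linordered_idom)
          obtain ab bb where Mb: "(ab,bb) \<in> G'" "qb = Max ({ab..bb} \<inter> Y)" using Q'(4) qbc(1) by auto
          have abgt: "ab > p1" using Mb unfolding G'_def by auto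
          have MbG: "(ab,bb) \<in> G" using Mb unfolding G'_def by auto
          have qbin: "qb \<in> {ab..bb}" using topin[OF MbG] Mb(2) unfolding top_def by auto
          have "\<not> (a \<le> ab \<and> bb \<le> b)"
          proof
            assume "a \<le> ab \<and> bb \<le> b"
            then have "a = ab" using less.prems(4) ab MbG by fastforce
            then show False using abgt False by auto
          qed
          then have "bb > b" using False abgt by auto
          then have "qc \<in> {ab..bb} \<inter> Y" using qbc qbin Q'(1) by auto
          then have "qc \<le> qb" using topmax[OF MbG] Mb(2) unfolding top_def by auto
          then show False using qbc by auto
        qed
        have fin2: "finite ({a..b} \<inter> Q')" using Q'(1) less.prems(2) by (auto intro: finite_subset)
        have "card ({a..b} \<inter> Q) \<le> card (insert p1 ({a..b} \<inter> Q'))"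
          by (rule card_mono) (auto simp: Q_def fin2)
        also have "\<dots> \<le> Suc (card ({a..b} \<inter> Q'))" by (simp add: card_insert_if fin2)
        finally have "card ({a..b} \<inter> Q) \<le> Suc (card ({a..b} \<inter> Q'))" .
        then show ?thesis using one by auto
      qed
    qed
    moreover have "\<forall>q\<in>Q. \<exists>(a,b)\<in>G. q = Max ({a..b} \<inter> Y)"
      using Q'(4) ab0 unfolding Q_def G'_def top_def by fastforce
    ultimately show ?thesis by blast
  qed
qed

lemma hub_count:
  fixes Q :: "real set" and F :: "real \<Rightarrow> nat" and lo hi :: "nat \<Rightarrow> real"
  assumes fQ: "finite Q" and cov: "\<forall>\<pi>\<in>Q. lo (F \<pi>) \<le> \<pi> \<and> \<pi> \<le> hi (F \<pi>)"
    and sm: "\<forall>\<pi>\<in>Q. card ({lo (F \<pi>)..hi (F \<pi>)} \<inter> Q) \<le> 2"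
  shows "card {\<pi>\<in>Q. lo (F \<pi>) \<le> z \<and> z \<le> hi (F \<pi>)} \<le> 4"
proof -
  define S1 where "S1 = {\<pi>\<in>Q. lo (F \<pi>) \<le> z \<and> z \<le> hi (F \<pi>) \<and> z \<le> \<pi>}"
  define S2 where "S2 = {\<pi>\<in>Q. lo (F \<pi>) \<le> z \<and> z \<le> hi (F \<pi>) \<and> \<pi> < z}"
  have f1: "finite S1" and f2: "finite S2" using fQ unfolding S1_def S2_def by auto
  have c1: "card S1 \<le> 2"
  proof (cases "S1 = {}")
    case True then show ?thesis by simp
  next
    case False
    define c where "c = Max S1"
    have cin: "c \<in> S1" unfolding c_def using f1 False by (rule Max_in)
    have "S1 \<subseteq> {lo (F c)..hi (F c)} \<inter> Q"
    proof
      fix \<pi> assume p: "\<pi> \<in> S1"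
      have "\<pi> \<le> c" unfolding c_def using f1 p by simp
      then show "\<pi> \<in> {lo (F c)..hi (F c)} \<inter> Q" using p cin cov unfolding S1_def by force
    qed
    then have "card S1 \<le> card ({lo (F c)..hi (F c)} \<inter> Q)" using fQ by (auto intro: card_mono)
    also have "\<dots> \<le> 2" using sm cin unfolding S1_def by auto
    finally show ?thesis .
  qed
  have c2: "card S2 \<le> 2"
  proof (cases "S2 = {}")
    case True then show ?thesis by simp
  next
    case False
    define c where "c = Min S2"
    have cin: "c \<in> S2" unfolding c_def using f2 False by (rule Min_in)
    have "S2 \<subseteq> {lo (F c)..hi (F c)} \<inter> Q"
    proof
      fix \<pi> assume p: "\<pi> \<in> S2"
      have "c \<le> \<pi>" unfolding c_def using f2 p by simp
      then show "\<pi> \<in> {lo (F c)..hi (F c)} \<inter> Q" using p cin cov unfolding S2_def by force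
    qed
    then have "card S2 \<le> card ({lo (F c)..hi (F c)} \<inter> Q)" using fQ by (auto intro: card_mono)
    also have "\<dots> \<le> 2" using sm cin unfolding S2_def by auto
    finally show ?thesis .
  qed
  have "{\<pi>\<in>Q. lo (F \<pi>) \<le> z \<and> z \<le> hi (F \<pi>)} = S1 \<union> S2" unfolding S1_def S2_def by auto
  then have "card {\<pi>\<in>Q. lo (F \<pi>) \<le> z \<and> z \<le> hi (F \<pi>)} \<le> card S1 + card S2"
    by (simp add: card_Un_le)
  then show ?thesis using c1 c2 by simp
qed

lemma PI:
  fixes Pt Iv :: "nat set" and y lo hi :: "nat \<Rightarrow> real"
  assumes fP: "finite Pt" and fI: "finite Iv"
  shows "\<exists>K. K \<subseteq> {(I,p). I \<in> Iv \<and> p \<in> Pt \<and> lo I \<le> y p \<and> y p \<le> hi I} \<and> card K \<le> card Iv + 8 * card Pt \<and>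
     (\<forall>I\<in>Iv. \<forall>p\<in>Pt. lo I \<le> y p \<and> y p \<le> hi I \<longrightarrow> (\<exists>X\<in>Iv. \<exists>q\<in>Pt. (X,p) \<in> K \<and> (X,q) \<in> K \<and> (I,q) \<in> K))"
proof -
  define Y where "Y = y ` Pt"
  have fY: "finite Y" unfolding Y_def using fP by auto
  define Iv' where "Iv' = {I\<in>Iv. \<exists>p\<in>Pt. lo I \<le> y p \<and> y p \<le> hi I}"
  have Iv'I: "Iv' \<subseteq> Iv" unfolding Iv'_def by auto
  define G where "G = (\<lambda>I. (lo I, hi I)) ` Iv'"
  have fG: "finite G" unfolding G_def Iv'_def using fI by auto
  define Gm where "Gm = {(a,b)\<in>G. \<forall>(c,d)\<in>G. c \<le> a \<and> b \<le> d \<longrightarrow> c = a \<and> d = b}"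
  have GmG: "Gm \<subseteq> G" unfolding Gm_def by auto
  have fGm: "finite Gm" using fG GmG by (auto intro: finite_subset)
  have maxabove: "\<exists>(c,d)\<in>Gm. c \<le> a \<and> b \<le> d" if ab: "(a,b) \<in> G" for a b
  proof -
    define S where "S = {(c,d)\<in>G. c \<le> a \<and> b \<le> d}"
    have fS: "finite S" using fG unfolding S_def by (auto intro: finite_subset)
    have neS: "S \<noteq> {}" using ab unfolding S_def by auto
    define m where "m = Max ((\<lambda>(c,d). d - c) ` S)"
    have "m \<in> (\<lambda>(c,d). d - c) ` S" unfolding m_def using fS neS by (intro Max_in) auto
    then obtain c d where cd: "(c,d) \<in> S" "m = d - c" by auto
    have "(c,d) \<in> Gm"
      unfolding Gm_def
    proof (clarsimp, intro conjI)
      show "(c,d) \<in> G" using cd unfolding S_def by auto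
    next
      show "\<forall>(c',d')\<in>G. c' \<le> c \<and> d \<le> d' \<longrightarrow> c' = c \<and> d' = d"
      proof (clarify)
        fix c' d' assume h: "(c',d') \<in> G" "c' \<le> c" "d \<le> d'"
        then have "(c',d') \<in> S" using cd unfolding S_def by auto
        then have "d' - c' \<le> m" unfolding m_def using fS by (auto intro!: Max_ge)
        then show "c' = c \<and> d' = d" using h cd by auto
      qed
    qed
    then show ?thesis using cd unfolding S_def by auto
  qed
  have GY: "\<forall>(a,b)\<in>Gm. {a..b} \<inter> Y \<noteq> {}"
    using GmG unfolding G_def Iv'_def Y_def by fastforce
  have nn: "\<forall>(a,b)\<in>Gm. \<forall>(c,d)\<in>Gm. c \<le> a \<and> b \<le> d \<longrightarrow> c = a \<and> d = b"
    unfolding Gm_def by fastforce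
  obtain Q where Q: "Q \<subseteq> Y" "\<forall>(a,b)\<in>Gm. {a..b} \<inter> Q \<noteq> {}" "\<forall>(a,b)\<in>Gm. card ({a..b} \<inter> Q) \<le> 2"
      "\<forall>q\<in>Q. \<exists>(a,b)\<in>Gm. q = Max ({a..b} \<inter> Y)"
    using pierce[OF fGm fY GY nn] by blast
  have fQ: "finite Q" using Q(1) fY by (auto intro: finite_subset)
  have small: "card ({lo X..hi X} \<inter> Q) \<le> 2" if X: "X \<in> Iv'" for X
  proof -
    have "(lo X, hi X) \<in> G" unfolding G_def using X by auto
    then obtain c d where cd: "(c,d) \<in> Gm" "c \<le> lo X" "hi X \<le> d" using maxabove by blast
    have "card ({lo X..hi X} \<inter> Q) \<le> card ({c..d} \<inter> Q)" using cd fQ by (intro card_mono) auto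
    also have "\<dots> \<le> 2" using Q(3) cd by auto
    finally show ?thesis .
  qed
  have QY: "\<exists>p\<in>Pt. y p = \<pi>" if "\<pi> \<in> Q" for \<pi> using Q(1) that unfolding Y_def by auto
  have Qcov: "\<exists>J\<in>Iv. lo J \<le> \<pi> \<and> \<pi> \<le> hi J" if pQ: "\<pi> \<in> Q" for \<pi>
  proof -
    obtain a b where ab: "(a,b) \<in> Gm" "\<pi> = Max ({a..b} \<inter> Y)" using Q(4) pQ by auto
    have "{a..b} \<inter> Y \<noteq> {}" using GY ab by auto
    then have "\<pi> \<in> {a..b}" using ab fY Max_in[of "{a..b} \<inter> Y"] by auto
    moreover obtain J where "J \<in> Iv'" "a = lo J" "b = hi J" using ab GmG unfolding G_def by auto
    ultimately show ?thesis using Iv'I by auto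
  qed
  define L where "L = (\<lambda>\<pi>. SOME X. X \<in> Iv \<and> lo X \<le> \<pi> \<and> \<pi> \<le> hi X \<and> (\<forall>X'\<in>Iv. lo X' \<le> \<pi> \<and> \<pi> \<le> hi X' \<longrightarrow> lo X \<le> lo X'))"
  define R where "R = (\<lambda>\<pi>. SOME X. X \<in> Iv \<and> lo X \<le> \<pi> \<and> \<pi> \<le> hi X \<and> (\<forall>X'\<in>Iv. lo X' \<le> \<pi> \<and> \<pi> \<le> hi X' \<longrightarrow> hi X' \<le> hi X))"
  have Lp: "L \<pi> \<in> Iv \<and> lo (L \<pi>) \<le> \<pi> \<and> \<pi> \<le> hi (L \<pi>) \<and> (\<forall>X'\<in>Iv. lo X' \<le> \<pi> \<and> \<pi> \<le> hi X' \<longrightarrow> lo (L \<pi>) \<le> lo X')"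
    if pQ: "\<pi> \<in> Q" for \<pi>
  proof -
    define S where "S = {X\<in>Iv. lo X \<le> \<pi> \<and> \<pi> \<le> hi X}"
    have fS: "finite S" using fI unfolding S_def by auto
    have neS: "S \<noteq> {}" using Qcov[OF pQ] unfolding S_def by auto
    have "Min (lo ` S) \<in> lo ` S" using fS neS by (intro Min_in) auto
    then obtain X where X: "X \<in> S" "lo X = Min (lo ` S)" by auto
    have "\<forall>X'\<in>S. lo X \<le> lo X'" using X fS by auto
    then have "\<exists>X. X \<in> Iv \<and> lo X \<le> \<pi> \<and> \<pi> \<le> hi X \<and> (\<forall>X'\<in>Iv. lo X' \<le> \<pi> \<and> \<pi> \<le> hi X' \<longrightarrow> lo X \<le> lo X')"
      using X unfolding S_def by blast
    then show ?thesis unfolding L_def by (rule someI_ex)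
  qed
  have Rp: "R \<pi> \<in> Iv \<and> lo (R \<pi>) \<le> \<pi> \<and> \<pi> \<le> hi (R \<pi>) \<and> (\<forall>X'\<in>Iv. lo X' \<le> \<pi> \<and> \<pi> \<le> hi X' \<longrightarrow> hi X' \<le> hi (R \<pi>))"
    if pQ: "\<pi> \<in> Q" for \<pi>
  proof -
    define S where "S = {X\<in>Iv. lo X \<le> \<pi> \<and> \<pi> \<le> hi X}"
    have fS: "finite S" using fI unfolding S_def by auto
    have neS: "S \<noteq> {}" using Qcov[OF pQ] unfolding S_def by auto
    have "Max (hi ` S) \<in> hi ` S" using fS neS by (intro Max_in) auto
    then obtain X where X: "X \<in> S" "hi X = Max (hi ` S)" by auto
    have "\<forall>X'\<in>S. hi X' \<le> hi X" using X fS by auto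
    then have "\<exists>X. X \<in> Iv \<and> lo X \<le> \<pi> \<and> \<pi> \<le> hi X \<and> (\<forall>X'\<in>Iv. lo X' \<le> \<pi> \<and> \<pi> \<le> hi X' \<longrightarrow> hi X' \<le> hi X)"
      using X unfolding S_def by blast
    then show ?thesis unfolding R_def by (rule someI_ex)
  qed
  have LIv': "L \<pi> \<in> Iv'" if "\<pi> \<in> Q" for \<pi> using Lp[OF that] QY[OF that] unfolding Iv'_def by auto
  have RIv': "R \<pi> \<in> Iv'" if "\<pi> \<in> Q" for \<pi> using Rp[OF that] QY[OF that] unfolding Iv'_def by auto
  have assign: "\<exists>\<pi>. \<pi> \<in> Q \<and> lo (L \<pi>) \<le> lo I \<and> hi I \<le> hi (R \<pi>)" if I: "I \<in> Iv'" for I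
  proof -
    have "(lo I, hi I) \<in> G" unfolding G_def using I by auto
    then obtain c d where cd: "(c,d) \<in> Gm" "c \<le> lo I" "hi I \<le> d" using maxabove by blast
    obtain J where J: "J \<in> Iv'" "c = lo J" "d = hi J" using cd GmG unfolding G_def by auto
    obtain \<pi> where pi: "\<pi> \<in> {c..d} \<inter> Q" using Q(2) cd by blast
    have "lo (L \<pi>) \<le> lo J" using Lp[of \<pi>] pi J Iv'I by auto
    moreover have "hi J \<le> hi (R \<pi>)" using Rp[of \<pi>] pi J Iv'I by auto
    ultimately show ?thesis using pi J cd by auto
  qed
  define pi where "pi = (\<lambda>I. SOME \<pi>. \<pi> \<in> Q \<and> lo (L \<pi>) \<le> lo I \<and> hi I \<le> hi (R \<pi>))"
  have pip: "pi I \<in> Q \<and> lo (L (pi I)) \<le> lo I \<and> hi I \<le> hi (R (pi I))" if "I \<in> Iv'" for I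
    unfolding pi_def using assign[OF that] by (rule someI_ex)
  define qq where "qq = (\<lambda>I. if lo I \<le> pi I \<and> pi I \<le> hi I then (SOME p. p \<in> Pt \<and> y p = pi I)
                              else (SOME p. p \<in> Pt \<and> lo I \<le> y p \<and> y p \<le> hi I))"
  have qqp: "qq I \<in> Pt \<and> lo I \<le> y (qq I) \<and> y (qq I) \<le> hi I \<and> (lo I \<le> pi I \<and> pi I \<le> hi I \<longrightarrow> y (qq I) = pi I)"
    if I: "I \<in> Iv'" for I
  proof (cases "lo I \<le> pi I \<and> pi I \<le> hi I")
    case True
    have "\<exists>p. p \<in> Pt \<and> y p = pi I" using QY pip[OF I] by blast
    then have "(SOME p. p \<in> Pt \<and> y p = pi I) \<in> Pt \<and> y (SOME p. p \<in> Pt \<and> y p = pi I) = pi I"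
      by (rule someI_ex)
    then have "qq I \<in> Pt \<and> y (qq I) = pi I" unfolding qq_def using True by simp
    then show ?thesis using True by auto
  next
    case False
    have "\<exists>p. p \<in> Pt \<and> lo I \<le> y p \<and> y p \<le> hi I" using I unfolding Iv'_def by auto
    then have "(SOME p. p \<in> Pt \<and> lo I \<le> y p \<and> y p \<le> hi I) \<in> Pt \<and> lo I \<le> y (SOME p. p \<in> Pt \<and> lo I \<le> y p \<and> y p \<le> hi I) \<and> y (SOME p. p \<in> Pt \<and> lo I \<le> y p \<and> y p \<le> hi I) \<le> hi I"
      by (rule someI_ex)
    moreover have "qq I = (SOME p. p \<in> Pt \<and> lo I \<le> y p \<and> y p \<le> hi I)" unfolding qq_def using False by (simp only: if_False)
    ultimately have "qq I \<in> Pt \<and> lo I \<le> y (qq I) \<and> y (qq I) \<le> hi I" by simp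
    then show ?thesis using False by auto
  qed
  define Hub where "Hub = L ` Q \<union> R ` Q"
  define K1 where "K1 = {(X,p). X \<in> Hub \<and> p \<in> Pt \<and> lo X \<le> y p \<and> y p \<le> hi X}"
  define K2 where "K2 = (\<lambda>I. (I, qq I)) ` Iv'"
  define K where "K = K1 \<union> K2"
  have HubIv: "Hub \<subseteq> Iv" unfolding Hub_def using Lp Rp by auto
  have sub: "K \<subseteq> {(I,p). I \<in> Iv \<and> p \<in> Pt \<and> lo I \<le> y p \<and> y p \<le> hi I}"
    unfolding K_def K1_def K2_def using HubIv qqp Iv'I by auto
  have cK2: "card K2 \<le> card Iv"
  proof -
    have "card K2 \<le> card Iv'" unfolding K2_def by (rule card_image_le) (use fI Iv'I in \<open>auto intro: finite_subset\<close>)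
    also have "\<dots> \<le> card Iv" using fI Iv'I by (rule card_mono)
    finally show ?thesis .
  qed
  have cK1: "card K1 \<le> 8 * card Pt"
  proof -
    have eq: "K1 = (\<Union>p\<in>Pt. (\<lambda>X. (X,p)) ` {X\<in>Hub. lo X \<le> y p \<and> y p \<le> hi X})"
      unfolding K1_def by auto
    have each: "card ((\<lambda>X. (X,p)) ` {X\<in>Hub. lo X \<le> y p \<and> y p \<le> hi X}) \<le> 8" for p
    proof -
      define SL where "SL = {\<pi>\<in>Q. lo (L \<pi>) \<le> y p \<and> y p \<le> hi (L \<pi>)}"
      define SR where "SR = {\<pi>\<in>Q. lo (R \<pi>) \<le> y p \<and> y p \<le> hi (R \<pi>)}"
      have cSL: "card SL \<le> 4" unfolding SL_def
        by (rule hub_count[OF fQ]) (use Lp small LIv' in auto)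
      have cSR: "card SR \<le> 4" unfolding SR_def
        by (rule hub_count[OF fQ]) (use Rp small RIv' in auto)
      have "{X\<in>Hub. lo X \<le> y p \<and> y p \<le> hi X} \<subseteq> L ` SL \<union> R ` SR"
        unfolding Hub_def SL_def SR_def by auto
      moreover have "finite (L ` SL \<union> R ` SR)" using fQ unfolding SL_def SR_def by auto
      ultimately have "card {X\<in>Hub. lo X \<le> y p \<and> y p \<le> hi X} \<le> card (L ` SL \<union> R ` SR)"
        by (rule card_mono[rotated])
      also have "\<dots> \<le> card (L ` SL) + card (R ` SR)" by (rule card_Un_le)
      also have "\<dots> \<le> card SL + card SR" by (intro add_mono card_image_le) (use fQ in \<open>auto simp: SL_def SR_def\<close>)
      finally have "card {X\<in>Hub. lo X \<le> y p \<and> y p \<le> hi X} \<le> 8" using cSL cSR by simp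
      moreover have "card ((\<lambda>X. (X,p)) ` {X\<in>Hub. lo X \<le> y p \<and> y p \<le> hi X}) \<le> card {X\<in>Hub. lo X \<le> y p \<and> y p \<le> hi X}"
        by (rule card_image_le) (use fQ in \<open>auto simp: Hub_def\<close>)
      ultimately show ?thesis by simp
    qed
    have "card K1 \<le> (\<Sum>p\<in>Pt. card ((\<lambda>X. (X,p)) ` {X\<in>Hub. lo X \<le> y p \<and> y p \<le> hi X}))"
      unfolding eq by (rule card_UN_le[OF fP])
    also have "\<dots> \<le> (\<Sum>p\<in>Pt. 8)" by (rule sum_mono) (rule each)
    finally show ?thesis by simp
  qed
  have cK: "card K \<le> card Iv + 8 * card Pt"
    unfolding K_def using card_Un_le[of K1 K2] cK1 cK2 by linarith
  have path: "\<exists>X\<in>Iv. \<exists>q\<in>Pt. (X,p) \<in> K \<and> (X,q) \<in> K \<and> (I,q) \<in> K"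
    if I: "I \<in> Iv" and p: "p \<in> Pt" and Ip: "lo I \<le> y p" "y p \<le> hi I" for I p
  proof -
    have I': "I \<in> Iv'" unfolding Iv'_def using I p Ip by blast
    define \<pi> where "\<pi> = pi I"
    define q where "q = qq I"
    have pq: "\<pi> \<in> Q" "lo (L \<pi>) \<le> lo I" "hi I \<le> hi (R \<pi>)" using pip[OF I'] unfolding \<pi>_def by auto
    have qp: "q \<in> Pt" "lo I \<le> y q" "y q \<le> hi I" "lo I \<le> \<pi> \<and> \<pi> \<le> hi I \<longrightarrow> y q = \<pi>"
      using qqp[OF I'] unfolding q_def \<pi>_def by auto
    have IqK: "(I,q) \<in> K" unfolding K_def K2_def q_def using I' by auto
    have hubK: "(X,z) \<in> K" if "X \<in> Hub" "z \<in> Pt" "lo X \<le> y z" "y z \<le> hi X" for X z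
      using that unfolding K_def K1_def by auto
    have LH: "L \<pi> \<in> Hub" and RH: "R \<pi> \<in> Hub" unfolding Hub_def using pq by auto
    have Lb: "lo (L \<pi>) \<le> \<pi>" "\<pi> \<le> hi (L \<pi>)" "L \<pi> \<in> Iv" using Lp[OF pq(1)] by auto
    have Rb: "lo (R \<pi>) \<le> \<pi>" "\<pi> \<le> hi (R \<pi>)" "R \<pi> \<in> Iv" using Rp[OF pq(1)] by auto
    show ?thesis
    proof (cases "y q \<le> \<pi>")
      case True
      show ?thesis
      proof (cases "y p \<le> \<pi>")
        case True
        have "lo (L \<pi>) \<le> y p" "y p \<le> hi (L \<pi>)" using True pq(2) Ip Lb by linarith+
        then have 1: "(L \<pi>, p) \<in> K" by (rule hubK[OF LH p])
        have "lo (L \<pi>) \<le> y q" "y q \<le> hi (L \<pi>)" using \<open>y q \<le> \<pi>\<close> pq(2) qp(2) Lb by linarith+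
        then have 2: "(L \<pi>, q) \<in> K" by (rule hubK[OF LH qp(1)])
        show ?thesis using 1 2 IqK Lb(3) qp(1) by blast
      next
        case False
        then have "lo I \<le> \<pi> \<and> \<pi> \<le> hi I" using \<open>y q \<le> \<pi>\<close> qp Ip by auto
        then have yq: "y q = \<pi>" using qp by auto
        have "lo (R \<pi>) \<le> y p" "y p \<le> hi (R \<pi>)" using False pq(3) Ip Rb by linarith+
        then have 1: "(R \<pi>, p) \<in> K" by (rule hubK[OF RH p])
        have "lo (R \<pi>) \<le> y q" "y q \<le> hi (R \<pi>)" using yq Rb by linarith+
        then have 2: "(R \<pi>, q) \<in> K" by (rule hubK[OF RH qp(1)])
        show ?thesis using 1 2 IqK Rb(3) qp(1) by blast
      qed
    next
      case False
      have "\<not> (lo I \<le> \<pi> \<and> \<pi> \<le> hi I)" using False qp by auto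
      then have lt: "lo I > \<pi>" using False qp by auto
      have "lo (R \<pi>) \<le> y p" "y p \<le> hi (R \<pi>)" using lt pq(3) Ip Rb by linarith+
      then have 1: "(R \<pi>, p) \<in> K" by (rule hubK[OF RH p])
      have "lo (R \<pi>) \<le> y q" "y q \<le> hi (R \<pi>)" using lt pq(3) qp(2,3) Rb by linarith+
      then have 2: "(R \<pi>, q) \<in> K" by (rule hubK[OF RH qp(1)])
      show ?thesis using 1 2 IqK Rb(3) qp(1) by blast
    qed
  qed
  have path': "\<forall>I\<in>Iv. \<forall>p\<in>Pt. lo I \<le> y p \<and> y p \<le> hi I \<longrightarrow> (\<exists>X\<in>Iv. \<exists>q\<in>Pt. (X,p) \<in> K \<and> (X,q) \<in> K \<and> (I,q) \<in> K)"
  proof (intro ballI impI)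
    fix I p assume h: "I \<in> Iv" "p \<in> Pt" "lo I \<le> y p \<and> y p \<le> hi I"
    show "\<exists>X\<in>Iv. \<exists>q\<in>Pt. (X,p) \<in> K \<and> (X,q) \<in> K \<and> (I,q) \<in> K"
      using h by (intro path) auto
  qed
  show ?thesis
    by (rule exI[of _ K]) (intro conjI sub cK path')
qed

lemma double_count:
  fixes I :: "'i set" and B :: "'b set"
  assumes "finite I" "finite B"
  shows "(\<Sum>i\<in>I. card {b\<in>B. P i b}) = (\<Sum>b\<in>B. card {i\<in>I. P i b})"
proof -
  have "(\<Sum>i\<in>I. card {b\<in>B. P i b}) = (\<Sum>i\<in>I. \<Sum>b\<in>B. if P i b then 1 else 0)"
    using assms by (simp add: sum.inter_filter[symmetric])
  also have "\<dots> = (\<Sum>b\<in>B. \<Sum>i\<in>I. if P i b then 1 else 0)" by (rule sum.swap)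
  also have "\<dots> = (\<Sum>b\<in>B. card {i\<in>I. P i b})"
    using assms by (simp add: sum.inter_filter[symmetric])
  finally show ?thesis .
qed

lemma canon_fin:
  fixes lo hi j :: nat
  shows "finite {k. lo \<le> k * 2^j \<and> (k+1) * 2^j \<le> hi \<and> P k}"
proof (rule finite_subset)
  show "{k. lo \<le> k * 2^j \<and> (k+1) * 2^j \<le> hi \<and> P k} \<subseteq> {..hi}"
  proof
    fix k assume "k \<in> {k. lo \<le> k * 2^j \<and> (k+1) * 2^j \<le> hi \<and> P k}"
    then have "(k+1) * 2^j \<le> hi" by simp
    moreover have "k \<le> (k+1) * 2^j" by (metis le_add1 mult_le_mono one_le_numeral one_le_power mult_1_right)
    ultimately show "k \<in> {..hi}" by simp
  qed
qed simp

lemma canon_two: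
  fixes lo hi j :: nat
  shows "card {k. lo \<le> k * 2^j \<and> (k+1) * 2^j \<le> hi \<and> \<not> (lo \<le> (k div 2) * 2^(Suc j) \<and> (k div 2 + 1) * 2^(Suc j) \<le> hi)} \<le> 2"
proof -
  define d :: nat where "d = 2^j"
  have dpos: "d > 0" unfolding d_def by simp
  have "{k. lo \<le> k * 2^j \<and> (k+1) * 2^j \<le> hi \<and> \<not> (lo \<le> (k div 2) * 2^(Suc j) \<and> (k div 2 + 1) * 2^(Suc j) \<le> hi)}
        \<subseteq> {hi div d - 1, (lo + d - 1) div d}"
  proof
    fix k assume "k \<in> {k. lo \<le> k * 2^j \<and> (k+1) * 2^j \<le> hi \<and> \<not> (lo \<le> (k div 2) * 2^(Suc j) \<and> (k div 2 + 1) * 2^(Suc j) \<le> hi)}"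
    then have h1: "lo \<le> k * d" and h2: "(k+1) * d \<le> hi"
      and h3: "\<not> (lo \<le> (k div 2) * (2 * d) \<and> (k div 2 + 1) * (2 * d) \<le> hi)"
      unfolding d_def by auto
    show "k \<in> {hi div d - 1, (lo + d - 1) div d}"
    proof (cases "even k")
      case True
      then obtain m where m: "k = 2 * m" by auto
      have e: "(k div 2) * (2 * d) = k * d" "(k div 2 + 1) * (2 * d) = (k + 2) * d" using m by (auto simp: algebra_simps)
      have "\<not> (lo \<le> k * d \<and> (k + 2) * d \<le> hi)" using h3 unfolding e .
      then have "hi < (k+2) * d" using h1 by auto
      then have "hi div d = k + 1" using h2 by (intro div_nat_eqI) (auto simp: algebra_simps)
      then show ?thesis by auto
    next
      case False
      then obtain m where m: "k = 2 * m + 1" by (metis oddE)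
      have e: "(k div 2) * (2 * d) = (k - 1) * d" "(k div 2 + 1) * (2 * d) = (k + 1) * d" using m by (auto simp: algebra_simps)
      have "\<not> (lo \<le> (k - 1) * d \<and> (k + 1) * d \<le> hi)" using h3 unfolding e .
      then have lt: "(k - 1) * d < lo" using h2 by auto
      have "(lo + d - 1) div d = k"
      proof (rule div_nat_eqI)
        have "(k - 1) * d + 1 \<le> lo" using lt by auto
        moreover have "(k - 1) * d + d = k * d" using m by (auto simp: algebra_simps)
        ultimately show "d * k \<le> lo + d - 1" by (auto simp: algebra_simps)
        show "lo + d - 1 < d * Suc k" using h1 dpos by (auto simp: algebra_simps)
      qed
      then show ?thesis by auto
    qed
  qed
  then have "card {k. lo \<le> k * 2^j \<and> (k+1) * 2^j \<le> hi \<and> \<not> (lo \<le> (k div 2) * 2^(Suc j) \<and> (k div 2 + 1) * 2^(Suc j) \<le> hi)}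
        \<le> card {hi div d - 1, (lo + d - 1) div d}" by (rule card_mono[rotated]) auto
  also have "\<dots> \<le> 2" by (simp add: card_insert_if)
  finally show ?thesis .
qed

lemma ST:
  fixes A B :: "nat set" and xa ya1 ya2 xb1 xb2 yb :: "nat \<Rightarrow> real"
  assumes fA: "finite A" and fB: "finite B"
  shows "\<exists>K. K \<subseteq> {(a,b). a \<in> A \<and> b \<in> B \<and> xb1 b \<le> xa a \<and> xa a \<le> xb2 b \<and> ya1 a \<le> yb b \<and> yb b \<le> ya2 a} \<and>
          card K \<le> (card A + 8 * card B + 8 * card B) * card {j::nat. 2^j \<le> card A} \<and>
          (\<forall>a\<in>A. \<forall>b\<in>B. xb1 b \<le> xa a \<and> xa a \<le> xb2 b \<and> ya1 a \<le> yb b \<and> yb b \<le> ya2 a \<longrightarrow>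
             (\<exists>a'\<in>A. \<exists>b'\<in>B. (a,b') \<in> K \<and> (a',b') \<in> K \<and> (a',b) \<in> K))"
proof -
  define Xs where "Xs = xa ` A"
  have fX: "finite Xs" unfolding Xs_def using fA by auto
  define N where "N = card Xs"
  have NA: "N \<le> card A" unfolding N_def Xs_def using fA by (rule card_image_le)
  define ra where "ra = (\<lambda>a. card {x\<in>Xs. x < xa a})"
  define lob where "lob = (\<lambda>b. card {x\<in>Xs. x < xb1 b})"
  define hib where "hib = (\<lambda>b. card {x\<in>Xs. x \<le> xb2 b})"
  have raN: "ra a < N" if "a \<in> A" for a
    unfolding ra_def N_def using that fX by (intro psubset_card_mono) (auto simp: Xs_def)
  have hibN: "hib b \<le> N" for b unfolding hib_def N_def using fX by (intro card_mono) auto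
  have x1: "xb1 b \<le> xa a \<longleftrightarrow> lob b \<le> ra a" if a: "a \<in> A" for a b
  proof
    assume "xb1 b \<le> xa a"
    then show "lob b \<le> ra a" unfolding lob_def ra_def using fX by (intro card_mono) auto
  next
    assume h: "lob b \<le> ra a"
    show "xb1 b \<le> xa a"
    proof (rule ccontr)
      assume "\<not> xb1 b \<le> xa a"
      then have "{x\<in>Xs. x < xa a} \<subset> {x\<in>Xs. x < xb1 b}" using a unfolding Xs_def by auto
      then have "ra a < lob b" unfolding lob_def ra_def using fX by (intro psubset_card_mono) auto
      then show False using h by auto
    qed
  qed
  have x2: "xa a \<le> xb2 b \<longleftrightarrow> ra a < hib b" if a: "a \<in> A" for a b
  proof
    assume "xa a \<le> xb2 b"
    then have "{x\<in>Xs. x < xa a} \<subset> {x\<in>Xs. x \<le> xb2 b}" using a unfolding Xs_def by auto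
    then show "ra a < hib b" unfolding hib_def ra_def using fX by (intro psubset_card_mono) auto
  next
    assume h: "ra a < hib b"
    show "xa a \<le> xb2 b"
    proof (rule ccontr)
      assume "\<not> xa a \<le> xb2 b"
      then have "hib b \<le> ra a" unfolding hib_def ra_def using fX by (intro card_mono) auto
      then show False using h by auto
    qed
  qed
  define inside where "inside = (\<lambda>j k b. lob b \<le> k * 2^j \<and> (k+1) * 2^j \<le> hib b)"
  define Cb where "Cb = (\<lambda>b. {(j,k). inside j k b \<and> \<not> inside (Suc j) (k div 2) b})"
  define Lv where "Lv = {j::nat. 2^j \<le> N}"
  have fLv: "finite Lv"
  proof -
    have "Lv \<subseteq> {..N}"
    proof
      fix x assume "x \<in> Lv"
      then have "2^x \<le> N" unfolding Lv_def by simp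
      then show "x \<in> {..N}" using less_exp[of x] by (simp del: less_exp)
    qed
    then show ?thesis by (rule finite_subset) auto
  qed
  define Idx where "Idx = Lv \<times> {..<N}"
  have fIdx: "finite Idx" unfolding Idx_def using fLv by auto
  define Ajk where "Ajk = (\<lambda>(j,k). {a\<in>A. ra a div 2^j = k})"
  define Bjk where "Bjk = (\<lambda>jk. {b\<in>B. jk \<in> Cb b})"
  have fAjk: "finite (Ajk jk)" for jk using fA unfolding Ajk_def by (auto split: prod.splits)
  have fBjk: "finite (Bjk jk)" for jk using fB unfolding Bjk_def by auto
  define Pr where "Pr = (\<lambda>jk K. K \<subseteq> {(I,p). I \<in> Ajk jk \<and> p \<in> Bjk jk \<and> ya1 I \<le> yb p \<and> yb p \<le> ya2 I} \<and>
      card K \<le> card (Ajk jk) + 8 * card (Bjk jk) \<and>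
     (\<forall>I\<in>Ajk jk. \<forall>p\<in>Bjk jk. ya1 I \<le> yb p \<and> yb p \<le> ya2 I \<longrightarrow> (\<exists>X\<in>Ajk jk. \<exists>q\<in>Bjk jk. (X,p) \<in> K \<and> (X,q) \<in> K \<and> (I,q) \<in> K)))"
  have ex: "\<forall>jk. \<exists>K. Pr jk K"
  proof
    fix jk show "\<exists>K. Pr jk K" unfolding Pr_def by (rule PI[OF fBjk fAjk])
  qed
  obtain Kf where Kf0: "\<forall>jk. Pr jk (Kf jk)" using choice[OF ex] by (rule exE)
  have Kfj: "Pr jk (Kf jk)" for jk using spec[OF Kf0, of jk] .
  have Kf1: "Kf jk \<subseteq> {(I,p). I \<in> Ajk jk \<and> p \<in> Bjk jk \<and> ya1 I \<le> yb p \<and> yb p \<le> ya2 I}" for jk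
    using Kfj[of jk] unfolding Pr_def by (elim conjE)
  have Kf2: "card (Kf jk) \<le> card (Ajk jk) + 8 * card (Bjk jk)" for jk
    using Kfj[of jk] unfolding Pr_def by (elim conjE)
  have Kf3: "\<forall>I\<in>Ajk jk. \<forall>p\<in>Bjk jk. ya1 I \<le> yb p \<and> yb p \<le> ya2 I \<longrightarrow> (\<exists>X\<in>Ajk jk. \<exists>q\<in>Bjk jk. (X,p) \<in> Kf jk \<and> (X,q) \<in> Kf jk \<and> (I,q) \<in> Kf jk)" for jk
    using Kfj[of jk] unfolding Pr_def by (elim conjE)
  define K where "K = (\<Union>jk\<in>Idx. Kf jk)"
  have inblock: "lob b \<le> ra a \<and> ra a < hib b" if "a \<in> Ajk (j,k)" "b \<in> Bjk (j,k)" for a b j k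
  proof -
    have "inside j k b" using that(2) unfolding Bjk_def Cb_def by auto
    then have i: "lob b \<le> k * 2^j" "(k+1) * 2^j \<le> hib b" unfolding inside_def by auto
    have k: "ra a div 2^j = k" using that(1) unfolding Ajk_def by auto
    have "k * 2^j \<le> ra a" using k by (metis div_times_less_eq_dividend)
    moreover have "ra a < (k+1) * 2^j" using k
      by (metis add.commute dividend_less_div_times mult.commute mult_Suc_right plus_1_eq_Suc pos2 zero_less_power)
    ultimately show ?thesis using i by auto
  qed
  have sub: "K \<subseteq> {(a,b). a \<in> A \<and> b \<in> B \<and> xb1 b \<le> xa a \<and> xa a \<le> xb2 b \<and> ya1 a \<le> yb b \<and> yb b \<le> ya2 a}"
  proof
    fix z assume "z \<in> K"
    then obtain jk where jk: "z \<in> Kf jk" unfolding K_def by auto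
    obtain a b where z: "z = (a,b)" by fastforce
    obtain j k where jk2: "jk = (j,k)" by fastforce
    have ab: "a \<in> Ajk jk" "b \<in> Bjk jk" "ya1 a \<le> yb b" "yb b \<le> ya2 a" using Kf1[of jk] jk z by auto
    have aA: "a \<in> A" using ab(1) unfolding Ajk_def jk2 by auto
    have bB: "b \<in> B" using ab(2) unfolding Bjk_def by auto
    have "lob b \<le> ra a \<and> ra a < hib b" using inblock ab(1,2) jk2 by blast
    then show "z \<in> {(a,b). a \<in> A \<and> b \<in> B \<and> xb1 b \<le> xa a \<and> xa a \<le> xb2 b \<and> ya1 a \<le> yb b \<and> yb b \<le> ya2 a}"
      using x1[OF aA] x2[OF aA] ab aA bB z by auto
  qed
  have cardK: "card K \<le> (card A + 8 * card B + 8 * card B) * card {j::nat. 2^j \<le> card A}"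
  proof -
    have "card K \<le> (\<Sum>jk\<in>Idx. card (Kf jk))" unfolding K_def by (rule card_UN_le[OF fIdx])
    also have "\<dots> \<le> (\<Sum>jk\<in>Idx. card (Ajk jk) + 8 * card (Bjk jk))" by (rule sum_mono) (rule Kf2)
    also have "\<dots> = (\<Sum>jk\<in>Idx. card (Ajk jk)) + 8 * (\<Sum>jk\<in>Idx. card (Bjk jk))"
      by (simp add: sum.distrib sum_distrib_left)
    also have "(\<Sum>jk\<in>Idx. card (Ajk jk)) \<le> card Lv * card A"
    proof -
      have "(\<Sum>jk\<in>Idx. card (Ajk jk)) = (\<Sum>j\<in>Lv. \<Sum>k\<in>{..<N}. card (Ajk (j,k)))"
        by (simp add: Idx_def sum.cartesian_product split_def)
      also have "\<dots> \<le> (\<Sum>j\<in>Lv. card A)"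
      proof (rule sum_mono)
        fix j
        have "(\<Sum>k\<in>{..<N}. card (Ajk (j,k))) = card (\<Union>k\<in>{..<N}. Ajk (j,k))"
          by (rule card_UN_disjoint[symmetric]) (auto simp: fA Ajk_def)
        also have "\<dots> \<le> card A" using fA by (intro card_mono) (auto simp: Ajk_def)
        finally show "(\<Sum>k\<in>{..<N}. card (Ajk (j,k))) \<le> card A" .
      qed
      also have "\<dots> = card Lv * card A" by simp
      finally show ?thesis .
    qed
    also have "(\<Sum>jk\<in>Idx. card (Bjk jk)) \<le> card B * (2 * card Lv)"
    proof -
      have "(\<Sum>jk\<in>Idx. card (Bjk jk)) = (\<Sum>b\<in>B. card {jk\<in>Idx. jk \<in> Cb b})"
        unfolding Bjk_def by (rule double_count[OF fIdx fB])
      also have "\<dots> \<le> (\<Sum>b\<in>B. 2 * card Lv)"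
      proof (rule sum_mono)
        fix b
        have "{jk\<in>Idx. jk \<in> Cb b} \<subseteq> (\<Union>j\<in>Lv. Pair j ` {k. inside j k b \<and> \<not> inside (Suc j) (k div 2) b})"
          unfolding Idx_def Cb_def by auto
        then have "card {jk\<in>Idx. jk \<in> Cb b} \<le> card (\<Union>j\<in>Lv. Pair j ` {k. inside j k b \<and> \<not> inside (Suc j) (k div 2) b})"
        proof (rule card_mono[rotated])
          show "finite (\<Union>j\<in>Lv. Pair j ` {k. inside j k b \<and> \<not> inside (Suc j) (k div 2) b})"
            using fLv canon_fin unfolding inside_def by (simp add: conj_assoc)
        qed
        also have "\<dots> \<le> (\<Sum>j\<in>Lv. card (Pair j ` {k. inside j k b \<and> \<not> inside (Suc j) (k div 2) b}))"
          by (rule card_UN_le[OF fLv])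
        also have "\<dots> \<le> (\<Sum>j\<in>Lv. 2)"
        proof (rule sum_mono)
          fix j
          have "card (Pair j ` {k. inside j k b \<and> \<not> inside (Suc j) (k div 2) b}) \<le> card {k. inside j k b \<and> \<not> inside (Suc j) (k div 2) b}"
            by (rule card_image_le) (use canon_fin in \<open>simp add: inside_def conj_assoc\<close>)
          also have "\<dots> \<le> 2" unfolding inside_def using canon_two by (simp add: conj_assoc)
          finally show "card (Pair j ` {k. inside j k b \<and> \<not> inside (Suc j) (k div 2) b}) \<le> 2" .
        qed
        finally show "card {jk\<in>Idx. jk \<in> Cb b} \<le> 2 * card Lv" by simp
      qed
      finally show ?thesis by simp
    qed
    finally have "card K \<le> card Lv * card A + 8 * (card B * (2 * card Lv))" by simp
    moreover have "card Lv \<le> card {j::nat. 2^j \<le> card A}"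
    proof (rule card_mono)
      show "finite {j::nat. 2^j \<le> card A}"
      proof (rule finite_subset)
        show "{j::nat. 2^j \<le> card A} \<subseteq> {..card A}"
        proof
          fix x assume "x \<in> {j::nat. 2^j \<le> card A}"
          then have "2^x \<le> card A" by simp
          then show "x \<in> {..card A}" using less_exp[of x] by (simp del: less_exp)
        qed
      qed auto
      show "Lv \<subseteq> {j. 2 ^ j \<le> card A}" unfolding Lv_def using NA by auto
    qed
    moreover have "card Lv * card A + 8 * (card B * (2 * card Lv)) = (card A + 8 * card B + 8 * card B) * card Lv"
      by (simp add: algebra_simps)
    ultimately have "card K \<le> (card A + 8 * card B + 8 * card B) * card Lv" by simp
    also have "\<dots> \<le> (card A + 8 * card B + 8 * card B) * card {j::nat. 2^j \<le> card A}"
      using \<open>card Lv \<le> card {j::nat. 2^j \<le> card A}\<close> by (rule mult_le_mono2)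
    finally show ?thesis .
  qed
  have path: "\<exists>a'\<in>A. \<exists>b'\<in>B. (a,b') \<in> K \<and> (a',b') \<in> K \<and> (a',b) \<in> K"
    if a: "a \<in> A" and b: "b \<in> B" and r: "xb1 b \<le> xa a" "xa a \<le> xb2 b" "ya1 a \<le> yb b" "yb b \<le> ya2 a" for a b
  proof -
    define r where "r = ra a"
    have lr: "lob b \<le> r" "r < hib b" using x1[OF a] x2[OF a] r unfolding r_def by auto
    define P where "P = (\<lambda>j. inside j (r div 2^j) b)"
    have P0: "P 0" unfolding P_def inside_def using lr by auto
    have Pb: "\<forall>j. P j \<longrightarrow> j \<le> hib b"
    proof (intro allI impI)
      fix j assume "P j"
      then have "(r div 2^j + 1) * 2^j \<le> hib b" unfolding P_def inside_def by auto
      moreover have "2^j \<le> (r div 2^j + 1) * 2^j" by simp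
      ultimately have "2^j \<le> hib b" by (rule order_trans[rotated])
      moreover have "j < 2^j" by (rule less_exp)
      ultimately show "j \<le> hib b" by linarith
    qed
    obtain j where j: "P j" "\<forall>j'. P j' \<longrightarrow> j' \<le> j" using Nat.ex_has_greatest_nat[OF P0 Pb] by blast
    define k where "k = r div 2^j"
    have nS: "\<not> P (Suc j)" using j(2) Suc_n_not_le_n by blast
    have kdiv: "k div 2 = r div 2^(Suc j)" unfolding k_def by (simp only: power_Suc2 div_mult2_eq)
    have inC: "(j,k) \<in> Cb b" unfolding Cb_def using j(1) nS kdiv unfolding P_def k_def by auto
    have jLv: "j \<in> Lv"
    proof -
      have "(k + 1) * 2^j \<le> hib b" using j(1) unfolding P_def inside_def k_def by auto
      moreover have "2^j \<le> (k + 1) * 2^j" by simp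
      ultimately have "2^j \<le> hib b" by (rule order_trans[rotated])
      then show ?thesis unfolding Lv_def using hibN[of b] by auto
    qed
    have kN: "k < N" unfolding k_def r_def using raN[OF a] by (meson div_le_dividend order.strict_trans1)
    have idx: "(j,k) \<in> Idx" unfolding Idx_def using jLv kN by auto
    have aA: "a \<in> Ajk (j,k)" unfolding Ajk_def k_def r_def using a by auto
    have bB: "b \<in> Bjk (j,k)" unfolding Bjk_def using b inC by auto
    have "\<exists>X\<in>Ajk (j,k). \<exists>q\<in>Bjk (j,k). (X,b) \<in> Kf (j,k) \<and> (X,q) \<in> Kf (j,k) \<and> (a,q) \<in> Kf (j,k)"
      using r(3,4) by (intro Kf3[of "(j,k)", rule_format, OF aA bB]) simp
    then obtain X q where Xq: "X \<in> Ajk (j,k)" "q \<in> Bjk (j,k)" "(X,b) \<in> Kf (j,k)" "(X,q) \<in> Kf (j,k)" "(a,q) \<in> Kf (j,k)"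
      by blast
    have "X \<in> A" using Xq(1) unfolding Ajk_def by auto
    moreover have "q \<in> B" using Xq(2) unfolding Bjk_def by auto
    moreover have "Kf (j,k) \<subseteq> K" unfolding K_def using idx by auto
    ultimately show ?thesis using Xq by blast
  qed
  have path': "\<forall>a\<in>A. \<forall>b\<in>B. xb1 b \<le> xa a \<and> xa a \<le> xb2 b \<and> ya1 a \<le> yb b \<and> yb b \<le> ya2 a \<longrightarrow>
             (\<exists>a'\<in>A. \<exists>b'\<in>B. (a,b') \<in> K \<and> (a',b') \<in> K \<and> (a',b) \<in> K)"
  proof (intro ballI impI)
    fix a b assume h: "a \<in> A" "b \<in> B" "xb1 b \<le> xa a \<and> xa a \<le> xb2 b \<and> ya1 a \<le> yb b \<and> yb b \<le> ya2 a"
    show "\<exists>a'\<in>A. \<exists>b'\<in>B. (a,b') \<in> K \<and> (a',b') \<in> K \<and> (a',b) \<in> K"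
      using h by (intro path) auto
  qed
  show ?thesis by (rule exI[of _ K]) (intro conjI sub cardK path')
qed



lemma cs_horiz: fixes a b c :: real
  shows "p \<in> closed_segment (a, b) (c, b) \<longleftrightarrow> fst p \<in> closed_segment a c \<and> snd p = b"
proof
  assume "p \<in> closed_segment (a,b) (c,b)"
  then obtain u where u: "0 \<le> u" "u \<le> 1" "p = (1-u) *\<^sub>R (a,b) + u *\<^sub>R (c,b)" by (auto simp: closed_segment_def)
  then have "fst p = (1-u) *\<^sub>R a + u *\<^sub>R c" "snd p = b" by (auto simp: algebra_simps)
  then show "fst p \<in> closed_segment a c \<and> snd p = b" using u(1,2) by (auto simp: closed_segment_def)
next
  assume h: "fst p \<in> closed_segment a c \<and> snd p = b"
  then obtain u where u: "0 \<le> u" "u \<le> 1" "fst p = (1-u) *\<^sub>R a + u *\<^sub>R c" by (auto simp: closed_segment_def)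
  then have "p = (1-u) *\<^sub>R (a,b) + u *\<^sub>R (c,b)" using h by (auto simp: algebra_simps prod_eq_iff)
  then show "p \<in> closed_segment (a,b) (c,b)" using u(1,2) by (auto simp: closed_segment_def)
qed

lemma cs_vert: fixes a b c :: real
  shows "p \<in> closed_segment (a, b) (a, c) \<longleftrightarrow> fst p = a \<and> snd p \<in> closed_segment b c"
proof
  assume "p \<in> closed_segment (a,b) (a,c)"
  then obtain u where u: "0 \<le> u" "u \<le> 1" "p = (1-u) *\<^sub>R (a,b) + u *\<^sub>R (a,c)" by (auto simp: closed_segment_def)
  then have "snd p = (1-u) *\<^sub>R b + u *\<^sub>R c" "fst p = a" by (auto simp: algebra_simps)
  then show "fst p = a \<and> snd p \<in> closed_segment b c" using u(1,2) by (auto simp: closed_segment_def)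
next
  assume h: "fst p = a \<and> snd p \<in> closed_segment b c"
  then obtain u where u: "0 \<le> u" "u \<le> 1" "snd p = (1-u) *\<^sub>R b + u *\<^sub>R c" by (auto simp: closed_segment_def)
  then have "p = (1-u) *\<^sub>R (a,b) + u *\<^sub>R (a,c)" using h by (auto simp: algebra_simps prod_eq_iff)
  then show "p \<in> closed_segment (a,b) (a,c)" using u(1,2) by (auto simp: closed_segment_def)
qed

definition hx1 :: "seg \<Rightarrow> real" where "hx1 s = min (fst (fst s)) (fst (snd s))"
definition hx2 :: "seg \<Rightarrow> real" where "hx2 s = max (fst (fst s)) (fst (snd s))"
definition hy :: "seg \<Rightarrow> real" where "hy s = snd (fst s)"
definition vx :: "seg \<Rightarrow> real" where "vx s = fst (fst s)"
definition vy1 :: "seg \<Rightarrow> real" where "vy1 s = min (snd (fst s)) (snd (snd s))"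
definition vy2 :: "seg \<Rightarrow> real" where "vy2 s = max (snd (fst s)) (snd (snd s))"

lemma seg_h: "horizontal s \<Longrightarrow> p \<in> seg_points s \<longleftrightarrow> hx1 s \<le> fst p \<and> fst p \<le> hx2 s \<and> snd p = hy s"
  unfolding horizontal_def seg_points_def hx1_def hx2_def hy_def
  by (cases s) (auto simp: cs_horiz closed_segment_eq_real_ivl split: if_splits)

lemma seg_v: "vertical s \<Longrightarrow> p \<in> seg_points s \<longleftrightarrow> fst p = vx s \<and> vy1 s \<le> snd p \<and> snd p \<le> vy2 s"
  unfolding vertical_def seg_points_def vy1_def vy2_def vx_def
  by (cases s) (auto simp: cs_vert closed_segment_eq_real_ivl split: if_splits)

lemma hx12: "hx1 s \<le> hx2 s" unfolding hx1_def hx2_def by auto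
lemma vy12: "vy1 s \<le> vy2 s" unfolding vy1_def vy2_def by auto

lemma int_hh:
  assumes "horizontal s" "horizontal t" "seg_points s \<inter> seg_points t \<noteq> {}"
  shows "hy s = hy t \<and> ((hx1 t \<le> hx1 s \<and> hx1 s \<le> hx2 t) \<or> (hx1 s \<le> hx1 t \<and> hx1 t \<le> hx2 s))"
proof -
  obtain p where "p \<in> seg_points s" "p \<in> seg_points t" using assms(3) by auto
  then show ?thesis using seg_h[OF assms(1)] seg_h[OF assms(2)] by auto
qed

lemma int_hh':
  assumes "horizontal s" "horizontal t" "hy s = hy t" "hx1 t \<le> hx1 s" "hx1 s \<le> hx2 t"
  shows "seg_points s \<inter> seg_points t \<noteq> {}"
proof -
  have "(hx1 s, hy s) \<in> seg_points s" using seg_h[OF assms(1)] hx12[of s] by auto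
  moreover have "(hx1 s, hy s) \<in> seg_points t" using seg_h[OF assms(2)] assms by auto
  ultimately show ?thesis by auto
qed

lemma int_vv:
  assumes "vertical s" "vertical t" "seg_points s \<inter> seg_points t \<noteq> {}"
  shows "vx s = vx t \<and> ((vy1 t \<le> vy1 s \<and> vy1 s \<le> vy2 t) \<or> (vy1 s \<le> vy1 t \<and> vy1 t \<le> vy2 s))"
proof -
  obtain p where "p \<in> seg_points s" "p \<in> seg_points t" using assms(3) by auto
  then show ?thesis using seg_v[OF assms(1)] seg_v[OF assms(2)] by auto
qed

lemma int_vv':
  assumes "vertical s" "vertical t" "vx s = vx t" "vy1 t \<le> vy1 s" "vy1 s \<le> vy2 t"
  shows "seg_points s \<inter> seg_points t \<noteq> {}"
proof -
  have "(vx s, vy1 s) \<in> seg_points s" using seg_v[OF assms(1)] vy12[of s] by auto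
  moreover have "(vx s, vy1 s) \<in> seg_points t" using seg_v[OF assms(2)] assms by auto
  ultimately show ?thesis by auto
qed

lemma int_hv:
  assumes "horizontal s" "vertical t"
  shows "seg_points s \<inter> seg_points t \<noteq> {} \<longleftrightarrow> hx1 s \<le> vx t \<and> vx t \<le> hx2 s \<and> vy1 t \<le> hy s \<and> hy s \<le> vy2 t"
proof
  assume "seg_points s \<inter> seg_points t \<noteq> {}"
  then obtain p where "p \<in> seg_points s" "p \<in> seg_points t" by auto
  then show "hx1 s \<le> vx t \<and> vx t \<le> hx2 s \<and> vy1 t \<le> hy s \<and> hy s \<le> vy2 t"
    using seg_h[OF assms(1)] seg_v[OF assms(2)] by auto
next
  assume h: "hx1 s \<le> vx t \<and> vx t \<le> hx2 s \<and> vy1 t \<le> hy s \<and> hy s \<le> vy2 t"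
  have "(vx t, hy s) \<in> seg_points s" using seg_h[OF assms(1)] h by auto
  moreover have "(vx t, hy s) \<in> seg_points t" using seg_v[OF assms(2)] h by auto
  ultimately show "seg_points s \<inter> seg_points t \<noteq> {}" by auto
qed



lemma hop_step: "hop_reach H k x v \<Longrightarrow> (u = x \<or> {u,x} \<in> H) \<Longrightarrow> hop_reach H (Suc k) u v"
  by (cases "u = x") auto

lemma hop3:
  assumes "x1 = x2 \<or> {x1,x2} \<in> H" "x2 = x3 \<or> {x2,x3} \<in> H" "x3 = x4 \<or> {x3,x4} \<in> H"
  shows "hop_reach H 3 x1 x4"
proof -
  have "hop_reach H 0 x4 x4" by simp
  then have "hop_reach H (Suc 0) x3 x4" using assms(3) by (rule hop_step)
  then have "hop_reach H (Suc (Suc 0)) x2 x4" using assms(2) by (rule hop_step)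
  then have "hop_reach H (Suc (Suc (Suc 0))) x1 x4" using assms(1) by (rule hop_step)
  then show ?thesis by (simp add: numeral_3_eq_3)
qed

lemma lv_fin: "finite {j::nat. 2^j \<le> (n::nat)}"
proof (rule finite_subset)
  show "{j::nat. 2^j \<le> n} \<subseteq> {..n::nat}"
  proof
    fix x assume "x \<in> {j::nat. 2^j \<le> n}"
    then have "2^x \<le> n" by simp
    then show "x \<in> {..n}" using less_exp[of x] by (simp del: less_exp)
  qed
qed simp

lemma lv_mono: "(m::nat) \<le> n \<Longrightarrow> card {j::nat. 2^j \<le> m} \<le> card {j::nat. 2^j \<le> n}"
  by (rule card_mono[OF lv_fin]) auto

lemma lv_bound:
  fixes n :: nat
  assumes n: "2 \<le> n"
  shows "real (card {j::nat. 2^j \<le> n}) \<le> 2 / ln 2 * ln (real n)"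
proof -
  define S where "S = {j::nat. 2^j \<le> n}"
  have fS: "finite S" unfolding S_def by (rule lv_fin)
  have "0 \<in> S" unfolding S_def using n by simp
  then have neS: "S \<noteq> {}" by auto
  define k where "k = Max S"
  have kS: "k \<in> S" unfolding k_def using fS neS by (rule Max_in)
  have "S \<subseteq> {..k}" unfolding k_def using fS by auto
  then have "card S \<le> card {..k}" by (rule card_mono[rotated]) simp
  then have c: "card S \<le> k + 1" by simp
  have "real k \<le> log 2 (real n)" using kS unfolding S_def by (intro le_log2_of_power) simp
  moreover have "1 \<le> log 2 (real n)" using n by simp
  ultimately have "real (card S) \<le> 2 * log 2 (real n)" using c by linarith
  also have "\<dots> = 2 / ln 2 * ln (real n)" by (simp add: log_def)
  finally show ?thesis unfolding S_def .
qed

theorem lemma19: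
  shows "\<exists>C::real. \<forall>(n::nat) (s::nat \<Rightarrow> seg).
           (\<forall>i<n. horizontal (s i) \<or> vertical (s i)) \<longrightarrow>
           (\<exists>H. is_hop_spanner (isect_edges n s) 3 H \<and>
                 real (card H) \<le> C * real n * ln (real n))"
proof (intro exI[of _ "102 / ln 2"] allI impI)
  fix n :: nat and s :: "nat \<Rightarrow> seg"
  assume hv: "\<forall>i<n. horizontal (s i) \<or> vertical (s i)"
  define Hs where "Hs = {i. i < n \<and> horizontal (s i)}"
  define Vs where "Vs = {i. i < n \<and> \<not> horizontal (s i)}"
  have fH: "finite Hs" and fV: "finite Vs" unfolding Hs_def Vs_def by auto
  have cH: "card Hs \<le> n" unfolding Hs_def using card_mono[of "{..<n}" "{i. i < n \<and> horizontal (s i)}"] by auto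
  have cV: "card Vs \<le> n" unfolding Vs_def using card_mono[of "{..<n}" "{i. i < n \<and> \<not> horizontal (s i)}"] by auto
  have Vv: "vertical (s i)" if "i \<in> Vs" for i using that hv unfolding Vs_def by auto
  obtain K1 where K1all: "(K1 \<subseteq> {(a,b). a \<in> Vs \<and> b \<in> Hs \<and> hx1 (s b) \<le> vx (s a) \<and> vx (s a) \<le> hx2 (s b) \<and> vy1 (s a) \<le> hy (s b) \<and> hy (s b) \<le> vy2 (s a)}) \<and> (card K1 \<le> (card Vs + 8 * card Hs + 8 * card Hs) * card {j::nat. 2^j \<le> card Vs}) \<and> (\<forall>a\<in>Vs. \<forall>b\<in>Hs. hx1 (s b) \<le> vx (s a) \<and> vx (s a) \<le> hx2 (s b) \<and> vy1 (s a) \<le> hy (s b) \<and> hy (s b) \<le> vy2 (s a) \<longrightarrow>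
             (\<exists>a'\<in>Vs. \<exists>b'\<in>Hs. (a,b') \<in> K1 \<and> (a',b') \<in> K1 \<and> (a',b) \<in> K1))"
    using ST[OF fV fH, of "\<lambda>i. hx1 (s i)" "\<lambda>i. vx (s i)" "\<lambda>i. hx2 (s i)" "\<lambda>i. vy1 (s i)" "\<lambda>i. hy (s i)" "\<lambda>i. vy2 (s i)"]
    by (rule exE)
  note K1 = conjunct1[OF K1all] conjunct1[OF conjunct2[OF K1all]] conjunct2[OF conjunct2[OF K1all]]
  obtain K2 where K2all: "(K2 \<subseteq> {(a,b). a \<in> Hs \<and> b \<in> Hs \<and> hx1 (s b) \<le> hx1 (s a) \<and> hx1 (s a) \<le> hx2 (s b) \<and> hy (s a) \<le> hy (s b) \<and> hy (s b) \<le> hy (s a)}) \<and> (card K2 \<le> (card Hs + 8 * card Hs + 8 * card Hs) * card {j::nat. 2^j \<le> card Hs}) \<and> (\<forall>a\<in>Hs. \<forall>b\<in>Hs. hx1 (s b) \<le> hx1 (s a) \<and> hx1 (s a) \<le> hx2 (s b) \<and> hy (s a) \<le> hy (s b) \<and> hy (s b) \<le> hy (s a) \<longrightarrow>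
             (\<exists>a'\<in>Hs. \<exists>b'\<in>Hs. (a,b') \<in> K2 \<and> (a',b') \<in> K2 \<and> (a',b) \<in> K2))"
    using ST[OF fH fH, of "\<lambda>i. hx1 (s i)" "\<lambda>i. hx1 (s i)" "\<lambda>i. hx2 (s i)" "\<lambda>i. hy (s i)" "\<lambda>i. hy (s i)" "\<lambda>i. hy (s i)"]
    by (rule exE)
  note K2 = conjunct1[OF K2all] conjunct1[OF conjunct2[OF K2all]] conjunct2[OF conjunct2[OF K2all]]
  obtain K3 where K3all: "(K3 \<subseteq> {(a,b). a \<in> Vs \<and> b \<in> Vs \<and> vy1 (s b) \<le> vy1 (s a) \<and> vy1 (s a) \<le> vy2 (s b) \<and> vx (s a) \<le> vx (s b) \<and> vx (s b) \<le> vx (s a)}) \<and> (card K3 \<le> (card Vs + 8 * card Vs + 8 * card Vs) * card {j::nat. 2^j \<le> card Vs}) \<and> (\<forall>a\<in>Vs. \<forall>b\<in>Vs. vy1 (s b) \<le> vy1 (s a) \<and> vy1 (s a) \<le> vy2 (s b) \<and> vx (s a) \<le> vx (s b) \<and> vx (s b) \<le> vx (s a) \<longrightarrow>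
             (\<exists>a'\<in>Vs. \<exists>b'\<in>Vs. (a,b') \<in> K3 \<and> (a',b') \<in> K3 \<and> (a',b) \<in> K3))"
    using ST[OF fV fV, of "\<lambda>i. vy1 (s i)" "\<lambda>i. vy1 (s i)" "\<lambda>i. vy2 (s i)" "\<lambda>i. vx (s i)" "\<lambda>i. vx (s i)" "\<lambda>i. vx (s i)"]
    by (rule exE)
  note K3 = conjunct1[OF K3all] conjunct1[OF conjunct2[OF K3all]] conjunct2[OF conjunct2[OF K3all]]
  define K where "K = K1 \<union> K2 \<union> K3"
  define H where "H = (\<lambda>(a,b). {a,b}) ` {p\<in>K. fst p \<noteq> snd p}"
  define E where "E = isect_edges n s"
  have Kint: "a < n \<and> b < n \<and> seg_points (s a) \<inter> seg_points (s b) \<noteq> {}" if ab: "(a,b) \<in> K" for a b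
  proof -
    consider "(a,b) \<in> K1" | "(a,b) \<in> K2" | "(a,b) \<in> K3" using ab unfolding K_def by auto
    then show ?thesis
    proof cases
      case 1
      then have h: "a \<in> Vs" "b \<in> Hs" "hx1 (s b) \<le> vx (s a) \<and> vx (s a) \<le> hx2 (s b) \<and> vy1 (s a) \<le> hy (s b) \<and> hy (s b) \<le> vy2 (s a)"
        using K1(1) by auto
      have hb: "horizontal (s b)" using h(2) unfolding Hs_def by auto
      have "seg_points (s b) \<inter> seg_points (s a) \<noteq> {}" using int_hv[OF hb Vv[OF h(1)]] h(3) by auto
      then show ?thesis using h unfolding Hs_def Vs_def by auto
    next
      case 2
      then have h: "a \<in> Hs" "b \<in> Hs" "hx1 (s b) \<le> hx1 (s a)" "hx1 (s a) \<le> hx2 (s b)" "hy (s a) = hy (s b)"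
        using K2(1) by auto
      have "seg_points (s a) \<inter> seg_points (s b) \<noteq> {}"
        using h by (intro int_hh') (auto simp: Hs_def)
      then show ?thesis using h unfolding Hs_def by auto
    next
      case 3
      then have h: "a \<in> Vs" "b \<in> Vs" "vy1 (s b) \<le> vy1 (s a)" "vy1 (s a) \<le> vy2 (s b)" "vx (s a) = vx (s b)"
        using K3(1) by auto
      have "seg_points (s a) \<inter> seg_points (s b) \<noteq> {}"
        using h Vv by (intro int_vv') auto
      then show ?thesis using h unfolding Vs_def by auto
    qed
  qed
  have HE: "H \<subseteq> E"
  proof
    fix e assume "e \<in> H"
    then obtain a b where ab: "(a,b) \<in> K" "a \<noteq> b" "e = {a,b}" unfolding H_def by auto
    then show "e \<in> E" using Kint[OF ab(1)] unfolding E_def isect_edges_def by blast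
  qed
  have stepK: "(a = b \<or> {a,b} \<in> H) \<and> (b = a \<or> {b,a} \<in> H)" if "(a,b) \<in> K" for a b
  proof (cases "a = b")
    case False
    then have "{a,b} \<in> H" unfolding H_def using that by force
    then show ?thesis by (simp add: insert_commute)
  qed simp
  have pathK: "hop_reach H 3 a b \<and> hop_reach H 3 b a"
    if "(a,b') \<in> K" "(a',b') \<in> K" "(a',b) \<in> K" for a b a' b'
  proof -
    have s1: "a = b' \<or> {a,b'} \<in> H" using stepK[OF that(1)] by (rule conjunct1)
    have s2: "b' = a' \<or> {b',a'} \<in> H" using stepK[OF that(2)] by (rule conjunct2)
    have s3: "a' = b \<or> {a',b} \<in> H" using stepK[OF that(3)] by (rule conjunct1)
    have r1: "b = a' \<or> {b,a'} \<in> H" using stepK[OF that(3)] by (rule conjunct2)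
    have r2: "a' = b' \<or> {a',b'} \<in> H" using stepK[OF that(2)] by (rule conjunct1)
    have r3: "b' = a \<or> {b',a} \<in> H" using stepK[OF that(1)] by (rule conjunct2)
    show ?thesis using hop3[OF s1 s2 s3] hop3[OF r1 r2 r3] by (rule conjI)
  qed
  have span: "hop_reach H 3 u v" if uv: "{u,v} \<in> E" for u v
  proof -
    obtain i j where ij: "{u,v} = {i,j}" "i < n" "j < n" "i \<noteq> j" "seg_points (s i) \<inter> seg_points (s j) \<noteq> {}"
      using uv unfolding E_def isect_edges_def by blast
    have "(u = i \<and> v = j) \<or> (u = j \<and> v = i)" using ij(1) by (auto simp: doubleton_eq_iff)
    then have uvp: "u < n" "v < n" "seg_points (s u) \<inter> seg_points (s v) \<noteq> {}" using ij by auto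
    have K1K: "K1 \<subseteq> K" and K2K: "K2 \<subseteq> K" and K3K: "K3 \<subseteq> K" unfolding K_def by auto
    show ?thesis
    proof (cases "horizontal (s u)"; cases "horizontal (s v)")
      assume hu: "horizontal (s u)" and hvv: "horizontal (s v)"
      have uH: "u \<in> Hs" and vH: "v \<in> Hs" using hu hvv uvp unfolding Hs_def by auto
      have r: "hy (s u) = hy (s v) \<and> ((hx1 (s v) \<le> hx1 (s u) \<and> hx1 (s u) \<le> hx2 (s v)) \<or> (hx1 (s u) \<le> hx1 (s v) \<and> hx1 (s v) \<le> hx2 (s u)))"
        using int_hh[OF hu hvv uvp(3)] .
      then consider "hx1 (s v) \<le> hx1 (s u) \<and> hx1 (s u) \<le> hx2 (s v)" | "hx1 (s u) \<le> hx1 (s v) \<and> hx1 (s v) \<le> hx2 (s u)" by blast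
      then show ?thesis
      proof cases
        case 1
        then obtain a' b' where "a' \<in> Hs" "b' \<in> Hs" "(u,b') \<in> K2" "(a',b') \<in> K2" "(a',v) \<in> K2"
          using K2(3) uH vH r by force
        then show ?thesis using pathK[of u b' a' v] K2K by blast
      next
        case 2
        then obtain a' b' where "a' \<in> Hs" "b' \<in> Hs" "(v,b') \<in> K2" "(a',b') \<in> K2" "(a',u) \<in> K2"
          using K2(3) uH vH r by force
        then show ?thesis using pathK[of v b' a' u] K2K by blast
      qed
    next
      assume hu: "horizontal (s u)" and hvv: "\<not> horizontal (s v)"
      have uH: "u \<in> Hs" and vV: "v \<in> Vs" using hu hvv uvp unfolding Hs_def Vs_def by auto
      have r: "hx1 (s u) \<le> vx (s v) \<and> vx (s v) \<le> hx2 (s u) \<and> vy1 (s v) \<le> hy (s u) \<and> hy (s u) \<le> vy2 (s v)"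
        using int_hv[OF hu Vv[OF vV]] uvp(3) by auto
      obtain a' b' where "a' \<in> Vs" "b' \<in> Hs" "(v,b') \<in> K1" "(a',b') \<in> K1" "(a',u) \<in> K1"
        using K1(3) uH vV r by force
      then show ?thesis using pathK[of v b' a' u] K1K by blast
    next
      assume hu: "\<not> horizontal (s u)" and hvv: "horizontal (s v)"
      have uV: "u \<in> Vs" and vH: "v \<in> Hs" using hu hvv uvp unfolding Hs_def Vs_def by auto
      have "seg_points (s v) \<inter> seg_points (s u) \<noteq> {}" using uvp(3) by auto
      then have r: "hx1 (s v) \<le> vx (s u) \<and> vx (s u) \<le> hx2 (s v) \<and> vy1 (s u) \<le> hy (s v) \<and> hy (s v) \<le> vy2 (s u)"
        using int_hv[OF hvv Vv[OF uV]] by auto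
      obtain a' b' where "a' \<in> Vs" "b' \<in> Hs" "(u,b') \<in> K1" "(a',b') \<in> K1" "(a',v) \<in> K1"
        using K1(3) uV vH r by force
      then show ?thesis using pathK[of u b' a' v] K1K by blast
    next
      assume hu: "\<not> horizontal (s u)" and hvv: "\<not> horizontal (s v)"
      have uV: "u \<in> Vs" and vV: "v \<in> Vs" using hu hvv uvp unfolding Vs_def by auto
      have r: "vx (s u) = vx (s v) \<and> ((vy1 (s v) \<le> vy1 (s u) \<and> vy1 (s u) \<le> vy2 (s v)) \<or> (vy1 (s u) \<le> vy1 (s v) \<and> vy1 (s v) \<le> vy2 (s u)))"
        using int_vv[OF Vv[OF uV] Vv[OF vV] uvp(3)] .
      then consider "vy1 (s v) \<le> vy1 (s u) \<and> vy1 (s u) \<le> vy2 (s v)" | "vy1 (s u) \<le> vy1 (s v) \<and> vy1 (s v) \<le> vy2 (s u)" by blast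
      then show ?thesis
      proof cases
        case 1
        then obtain a' b' where "a' \<in> Vs" "b' \<in> Vs" "(u,b') \<in> K3" "(a',b') \<in> K3" "(a',v) \<in> K3"
          using K3(3) uV vV r by force
        then show ?thesis using pathK[of u b' a' v] K3K by blast
      next
        case 2
        then obtain a' b' where "a' \<in> Vs" "b' \<in> Vs" "(v,b') \<in> K3" "(a',b') \<in> K3" "(a',u) \<in> K3"
          using K3(3) uV vV r by force
        then show ?thesis using pathK[of v b' a' u] K3K by blast
      qed
    qed
  qed
  have spanner: "is_hop_spanner E 3 H" unfolding is_hop_spanner_def using HE span by blast
  have "K \<subseteq> (Vs \<union> Hs) \<times> (Vs \<union> Hs)" using K1(1) K2(1) K3(1) unfolding K_def by auto
  moreover have "finite ((Vs \<union> Hs) \<times> (Vs \<union> Hs))" using fH fV by simp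
  ultimately have fK: "finite K" by (rule finite_subset)
  have cardH: "card H \<le> card K1 + card K2 + card K3"
  proof -
    have "card H \<le> card {p\<in>K. fst p \<noteq> snd p}" unfolding H_def by (rule card_image_le) (use fK in auto)
    also have "\<dots> \<le> card K" by (rule card_mono[OF fK]) auto
    also have "\<dots> \<le> card K1 + card K2 + card K3" unfolding K_def
      by (meson card_Un_le add_le_mono order_trans le_refl)
    finally show ?thesis .
  qed
  define LV where "LV = card {j::nat. 2^j \<le> n}"
  have c1: "card K1 \<le> 17 * n * LV"
  proof -
    have "card K1 \<le> (card Vs + 8 * card Hs + 8 * card Hs) * card {j::nat. 2^j \<le> card Vs}" by (rule K1(2))
    also have "\<dots> \<le> (17 * n) * LV" unfolding LV_def using cH cV lv_mono[OF cV] by (intro mult_le_mono) auto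
    finally show ?thesis by simp
  qed
  have c2: "card K2 \<le> 17 * n * LV"
  proof -
    have "card K2 \<le> (card Hs + 8 * card Hs + 8 * card Hs) * card {j::nat. 2^j \<le> card Hs}" by (rule K2(2))
    also have "\<dots> \<le> (17 * n) * LV" unfolding LV_def using cH lv_mono[OF cH] by (intro mult_le_mono) auto
    finally show ?thesis by simp
  qed
  have c3: "card K3 \<le> 17 * n * LV"
  proof -
    have "card K3 \<le> (card Vs + 8 * card Vs + 8 * card Vs) * card {j::nat. 2^j \<le> card Vs}" by (rule K3(2))
    also have "\<dots> \<le> (17 * n) * LV" unfolding LV_def using cV lv_mono[OF cV] by (intro mult_le_mono) auto
    finally show ?thesis by simp
  qed
  have bound: "real (card H) \<le> 102 / ln 2 * real n * ln (real n)"
  proof (cases "n \<le> 1")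
    case True
    have "E = {}" unfolding E_def isect_edges_def using True by auto
    then have "H = {}" using HE by auto
    moreover have "0 \<le> 102 / ln 2 * real n * ln (real n)"
      using True by (cases n) auto
    ultimately show ?thesis by simp
  next
    case False
    then have n2: "2 \<le> n" by simp
    have "card H \<le> 51 * n * LV" using cardH c1 c2 c3 by linarith
    then have "real (card H) \<le> 51 * real n * real LV" by (metis of_nat_le_iff of_nat_mult of_nat_numeral)
    also have "\<dots> \<le> 51 * real n * (2 / ln 2 * ln (real n))"
      unfolding LV_def using lv_bound[OF n2] by (intro mult_left_mono) auto
    also have "\<dots> = 102 / ln 2 * real n * ln (real n)" by simp
    finally show ?thesis .
  qed
  show "\<exists>H. is_hop_spanner (isect_edges n s) 3 H \<and> real (card H) \<le> 102 / ln 2 * real n * ln (real n)"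
    using spanner bound unfolding E_def by blast
qed

end
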